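(* Let $\Sigma$ be a finite alphabet. The function $d_2:\Sigma^*\times\Sigma^*\to\mathbb{Z}_{\ge0}$, $d_2(u,v)=H(\underline{u},\underline{v})+\lceil |l(u)-l(v)|/2\rceil$, is an integer-valued metric on $\Sigma^*$, and it is Hamming compatible.
   Context: $\Sigma_n$ is the set of words of length $n$ over $\Sigma$, $\Sigma^*$ the set of all finite words, $l(u)$ the length of $u$. $H$ is the Hamming distance between equal-length words. Truncated Hamming function: if $l(u)\ge l(v)$, $\underline{u}$ is the prefix of $u$ of length $l(v)$ and $\underline{v}=v$ (symmetrically otherwise), and $H(\underline{u},\underline{v})$ is the Hamming distance between these equal-length words. A metric $\delta$ on $\Sigma^*$ is Hamming compatible if $\delta(u,v)=H(u,v)$ whenever $l(u)=l(v)$. *)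

theory Defs
  imports Complex_Main
begin

definition hamming :: "'a list \<Rightarrow> 'a list \<Rightarrow> nat" where
  "hamming u v = card {i. i < length u \<and> u ! i \<noteq> v ! i}"

definition trunc_hamming :: "'a list \<Rightarrow> 'a list \<Rightarrow> nat" where
  "trunc_hamming u v =
     hamming (take (min (length u) (length v)) u) (take (min (length u) (length v)) v)"

definition d2 :: "'a list \<Rightarrow> 'a list \<Rightarrow> nat" where
  "d2 u v = trunc_hamming u v
     + nat \<lceil>real_of_int \<bar>int (length u) - int (length v)\<bar> / 2\<rceil>"

definition is_metric :: "('a \<Rightarrow> 'a \<Rightarrow> nat) \<Rightarrow> bool" where
  "is_metric d \<longleftrightarrow> (\<forall>x y. d x y = 0 \<longleftrightarrow> x = y)
                  \<and> (\<forall>x y. d x y = d y x)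
                  \<and> (\<forall>x y z. d x z \<le> d x y + d y z)"

definition hamming_compatible :: "('a list \<Rightarrow> 'a list \<Rightarrow> nat) \<Rightarrow> bool" where
  "hamming_compatible d \<longleftrightarrow> (\<forall>u v. length u = length v \<longrightarrow> d u v = hamming u v)"

end

theory Submission
  imports Defs
begin

definition S :: "'a list \<Rightarrow> 'a list \<Rightarrow> nat set" where
  "S u v = {i. i < length u \<and> i < length v \<and> u!i \<noteq> v!i}"

lemma fin_S: "finite (S u v)" unfolding S_def by (rule finite_subset[of _ "{..<length u}"]) auto

lemma th_S: "trunc_hamming u v = card (S u v)"
  unfolding trunc_hamming_def hamming_def S_def
  by (rule arg_cong[where f=card]) auto

lemma ceil_half: "nat \<lceil>real n / 2\<rceil> = (n + 1) div 2"
proof -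
  have "\<lceil>real n / 2\<rceil> = int ((n + 1) div 2)"
  proof (rule ceiling_unique)
    obtain k r where n: "n = 2*k + r" "r < 2" by (metis div_mult_mod_eq mod_less_divisor zero_less_numeral mult.commute)
    have r: "r = 0 \<or> r = 1" using n(2) by auto
    have q: "(n+1) div 2 = k + r" using r n(1) by auto
    show "real_of_int (int ((n + 1) div 2)) - 1 < real n / 2" using r unfolding q n(1) by auto
    show "real n / 2 \<le> real_of_int (int ((n + 1) div 2))" using r unfolding q n(1) by auto
  qed
  thus ?thesis by simp
qed

lemma dist_term: "nat \<lceil>real_of_int \<bar>int a - int b\<bar> / 2\<rceil> = ((if a \<ge> b then a - b else b - a) + 1) div 2"
proof -
  have "real_of_int \<bar>int a - int b\<bar> = real (if a \<ge> b then a - b else b - a)" by auto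
  thus ?thesis using ceil_half by metis
qed

lemma d2_alt: "d2 u v = card (S u v) + ((if length u \<ge> length v then length u - length v else length v - length u) + 1) div 2"
  unfolding d2_def th_S dist_term ..

lemma S_sym: "S u v = S v u" unfolding S_def by auto

lemma S_tri: "card (S u w) \<le> card (S u v) + card (S v w) + (min (length u) (length w) - length v)"
proof -
  have "S u w \<subseteq> S u v \<union> S v w \<union> {length v..<min (length u) (length w)}"
    unfolding S_def by auto
  hence "card (S u w) \<le> card (S u v \<union> S v w \<union> {length v..<min (length u) (length w)})"
    by (intro card_mono) (auto simp: fin_S)
  also have "\<dots> \<le> card (S u v \<union> S v w) + card {length v..<min (length u) (length w)}"
    by (rule card_Un_le)
  also have "\<dots> \<le> card (S u v) + card (S v w) + card {length v..<min (length u) (length w)}"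
    using card_Un_le by simp
  finally show ?thesis by simp
qed

theorem proposition2p4:
  shows "is_metric (d2 :: 'a::finite list \<Rightarrow> 'a list \<Rightarrow> nat)
         \<and> hamming_compatible (d2 :: 'a::finite list \<Rightarrow> 'a list \<Rightarrow> nat)"
proof -
  have z: "d2 x y = 0 \<longleftrightarrow> x = y" for x y :: "'a list"
  proof
    assume h: "d2 x y = 0"
    hence l: "length x = length y" unfolding d2_alt by (auto split: if_splits)
    from h have "card (S x y) = 0" unfolding d2_alt by simp
    hence "S x y = {}" using fin_S[of x y] by simp
    thus "x = y" using l unfolding S_def by (auto intro: nth_equalityI)
  next
    assume "x = y" thus "d2 x y = 0" unfolding d2_alt S_def by simp
  qed
  have s: "d2 x y = d2 y x" for x y :: "'a list"
    unfolding d2_alt S_sym[of x y] by auto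
  have t: "d2 x z \<le> d2 x y + d2 y z" for x y z :: "'a list"
  proof -
    have "card (S x z) \<le> card (S x y) + card (S y z) + (min (length x) (length z) - length y)"
      by (rule S_tri)
    thus ?thesis unfolding d2_alt by (auto split: if_splits; presburger)
  qed
  have h: "length u = length v \<Longrightarrow> d2 u v = hamming u v" for u v :: "'a list"
    unfolding d2_def trunc_hamming_def by simp
  show ?thesis using z s t h unfolding is_metric_def hamming_compatible_def by blast
qed

end
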